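(* Let $n\ge1$. Then $$\mathbf{C}_n\times\mathbf{C}_n=\sum_{d\mid n}\#\{P\in\mathbf{SP}_n:|\mathrm{Stab}(P)|=d\}\cdot\mathbf{C}_{(d^{n/d})}.$$ Equivalently, the coefficients $b^\mu_{n,n}$ defined by $\mathbf{C}_{(n)}(\mathbf{z})\star\mathbf{C}_{(n)}(\mathbf{z})=\sum_{\mu\vdash n}b^\mu_{n,n}\mathbf{C}_\mu(\mathbf{z})$ satisfy $b^\mu_{n,n}=\#\{P\in\mathbf{SP}_n:|\mathrm{Stab}(P)|=d\}$ if $\mu=(d^{n/d})$ for some $d\mid n$, and $b^\mu_{n,n}=0$ otherwise.
   Context: For $\mu\vdash n$, $\sigma_\mu$ is the standard permutation of cycle type $\mu$ (cycles filled with $1,\ldots,n$ in increasing order), $\mathbf{C}_\mu=X^n/\langle\sigma_\mu\rangle$ where $(X^n/H)[U]=\{\lambda H:\lambda:[n]\to U\text{ bijection}\}$, $\mathbf{C}_n:=\mathbf{C}_{(n)}$, $(d^{n/d})$ is the partition with $n/d$ parts equal to $d$, and $(F\times G)[U]=F[U]\times G[U]$; $\mathbf{C}_\mu(\mathbf{z})=\frac{1}{o(\sigma_\mu)}\sum_{g\in\langle\sigma_\mu\rangle}p_{\lambda(g)}$ is the cycle index, forming a basis of $\Lambda_n\otimes\mathbb{Q}$, and $\star$ is the Kronecker product ($p_\lambda\star p_\nu=\delta_{\lambda\nu}z_\lambda p_\lambda$). Steggall patterns: the group $\mathbb{Z}_n\times\mathbb{Z}_n$ acts on permutations $(P_1,\ldots,P_n)$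 of $[n]$ (viewed as $n$ non-attacking marked cells in an $n\times n$ grid) by $(r,k)\cdot(P_i)_i=(P_{i+r}+k \bmod n)_i$ (indices and values taken mod $n$ in $\{1,\ldots,n\}$), i.e. cyclic shift of indices and translation of values. $\mathbf{SP}_n$ is the set of orbits (Steggall patterns). For $P\in\mathbf{SP}_n$, $\mathrm{Stab}(P)=\{(r,k)\in\mathbb{Z}_n\times\mathbb{Z}_n:(P_{i+r}+k\bmod n)_i=(P_i)_i\}$ computed for any representative $(P_i)_i$ of the orbit (independent of the representative since the group is abelian). *)

theory Defs
  imports Main "HOL-Library.FuncSet" "HOL-Combinatorics.Permutations"
begin

text \<open>A partition mu is given as a list of its parts. The standard permutation
  sigma_mu of [n] = {1..n}: the cycles are consecutive blocks of 1..n of lengths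
  mu_1, mu_2, ..., each cycle mapping i to i+1 and the last element of the block
  back to its first element.\<close>

definition std_perm :: "nat list \<Rightarrow> nat \<Rightarrow> nat" where
  "std_perm mu i =
     (let s = (\<lambda>k. sum_list (take k mu)) in
      if (\<exists>k<length mu. s k < i \<and> i \<le> s (Suc k)) then
        (let k = (THE k. k < length mu \<and> s k < i \<and> i \<le> s (Suc k)) in
           if i = s (Suc k) then s k + 1 else i + 1)
      else i)"

definition cyc_group :: "(nat \<Rightarrow> nat) \<Rightarrow> (nat \<Rightarrow> nat) set" where
  "cyc_group \<sigma> = range (\<lambda>k. \<sigma> ^^ k)"

definition lcoset :: "(nat \<Rightarrow> 'a) \<Rightarrow> (nat \<Rightarrow> nat) set \<Rightarrow> (nat \<Rightarrow> 'a) set" where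
  "lcoset lam H = (\<lambda>h. lam \<circ> h) ` H"

definition quot_species :: "nat \<Rightarrow> (nat \<Rightarrow> nat) set \<Rightarrow> 'a set \<Rightarrow> (nat \<Rightarrow> 'a) set set" where
  "quot_species n H U =
     {lcoset lam H | lam. bij_betw lam {1..n} U \<and> lam \<in> extensional {1..n}}"

definition quot_transport :: "nat \<Rightarrow> ('a \<Rightarrow> 'b) \<Rightarrow> (nat \<Rightarrow> 'a) set \<Rightarrow> (nat \<Rightarrow> 'b) set" where
  "quot_transport n f s = (\<lambda>lam. restrict (f \<circ> lam) {1..n}) ` s"

definition C_species :: "nat list \<Rightarrow> 'a set \<Rightarrow> (nat \<Rightarrow> 'a) set set" where
  "C_species mu U = quot_species (sum_list mu) (cyc_group (std_perm mu)) U"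

definition stg_act :: "nat \<Rightarrow> nat \<Rightarrow> nat \<Rightarrow> (nat \<Rightarrow> nat) \<Rightarrow> (nat \<Rightarrow> nat)" where
  "stg_act n r k P =
     (\<lambda>i. if i \<in> {1..n} then (P ((i - 1 + r) mod n + 1) - 1 + k) mod n + 1 else i)"

definition stg_orbit :: "nat \<Rightarrow> (nat \<Rightarrow> nat) \<Rightarrow> (nat \<Rightarrow> nat) set" where
  "stg_orbit n P = {stg_act n r k P | r k. r < n \<and> k < n}"

definition SP :: "nat \<Rightarrow> (nat \<Rightarrow> nat) set set" where
  "SP n = {stg_orbit n P | P. P permutes {1..n}}"

definition stg_stab :: "nat \<Rightarrow> (nat \<Rightarrow> nat) \<Rightarrow> (nat \<times> nat) set" where
  "stg_stab n P = {(r, k). r < n \<and> k < n \<and> stg_act n r k P = P}"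

definition pattern_stab :: "nat \<Rightarrow> (nat \<Rightarrow> nat) set \<Rightarrow> (nat \<times> nat) set" where
  "pattern_stab n Q = stg_stab n (SOME P. P \<in> Q)"

definition num_patterns_stab :: "nat \<Rightarrow> nat \<Rightarrow> nat" where
  "num_patterns_stab n d = card {Q \<in> SP n. card (pattern_stab n Q) = d}"

definition lhs_species :: "nat \<Rightarrow> 'a set \<Rightarrow> ((nat \<Rightarrow> 'a) set \<times> (nat \<Rightarrow> 'a) set) set" where
  "lhs_species n U = C_species [n] U \<times> C_species [n] U"

definition lhs_transport ::
  "nat \<Rightarrow> ('a \<Rightarrow> 'a) \<Rightarrow> ((nat \<Rightarrow> 'a) set \<times> (nat \<Rightarrow> 'a) set) \<Rightarrow> ((nat \<Rightarrow> 'a) set \<times> (nat \<Rightarrow> 'a) set)" where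
  "lhs_transport n f x = (quot_transport n f (fst x), quot_transport n f (snd x))"

text \<open>(sum over d | n of  m_d * C_(d^(n/d)))[U], with m_d = #{P in SP_n : |Stab P| = d};
  a structure is (d, j, s) with j < m_d indexing the copy.\<close>
definition rhs_species :: "nat \<Rightarrow> 'a set \<Rightarrow> (nat \<times> nat \<times> (nat \<Rightarrow> 'a) set) set" where
  "rhs_species n U =
     {(d, j, s). d dvd n \<and> j < num_patterns_stab n d \<and> s \<in> C_species (replicate (n div d) d) U}"

definition rhs_transport ::
  "nat \<Rightarrow> ('a \<Rightarrow> 'a) \<Rightarrow> (nat \<times> nat \<times> (nat \<Rightarrow> 'a) set) \<Rightarrow> (nat \<times> nat \<times> (nat \<Rightarrow> 'a) set)" where
  "rhs_transport n f x = (case x of (d, j, s) \<Rightarrow> (d, j, quot_transport n f s))"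

end

theory Submission
  imports Defs
begin
lemma sum_take_mono: "k1 \<le> k2 \<Longrightarrow> sum_list (take k1 (mu::nat list)) \<le> sum_list (take k2 mu)"
proof (induction mu arbitrary: k1 k2)
  case Nil then show ?case by simp
next
  case (Cons a mu)
  then show ?case by (cases k1; cases k2) auto
qed

lemma std_perm_at:
  assumes "k < length mu" "sum_list (take k mu) < i" "i \<le> sum_list (take (Suc k) mu)"
  shows "std_perm mu i = (if i = sum_list (take (Suc k) mu) then sum_list (take k mu) + 1 else i + 1)"
proof -
  have u: "k' = k" if "k' < length mu" "sum_list (take k' mu) < i" "i \<le> sum_list (take (Suc k') mu)" for k'
  proof (rule ccontr)
    assume "k' \<noteq> k"
    then consider "Suc k' \<le> k" | "Suc k \<le> k'" by (metis nat_neq_iff Suc_leI)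
    then show False
    proof cases
      case 1 
      have "sum_list (take (Suc k') mu) \<le> sum_list (take k mu)" using sum_take_mono[OF 1] .
      then show ?thesis using that(3) assms(2) by simp
    next
      case 2
      have "sum_list (take (Suc k) mu) \<le> sum_list (take k' mu)" using sum_take_mono[OF 2] .
      then show ?thesis using that(2) assms(3) by simp
    qed
  qed
  have th: "(THE k. k < length mu \<and> sum_list (take k mu) < i \<and> i \<le> sum_list (take (Suc k) mu)) = k"
  proof (rule the_equality)
    show "k < length mu \<and> sum_list (take k mu) < i \<and> i \<le> sum_list (take (Suc k) mu)" using assms by blast
  next
    fix k' assume "k' < length mu \<and> sum_list (take k' mu) < i \<and> i \<le> sum_list (take (Suc k') mu)"
    then show "k' = k" using u by blast
  qed
  have ex: "\<exists>k<length mu. sum_list (take k mu) < i \<and> i \<le> sum_list (take (Suc k) mu)"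
    using assms by blast
  show ?thesis unfolding std_perm_def Let_def by (simp only: if_P[OF ex] th)
qed

lemma std_perm_out:
  assumes "\<not> (\<exists>k<length mu. sum_list (take k mu) < i \<and> i \<le> sum_list (take (Suc k) mu))"
  shows "std_perm mu i = i"
  unfolding std_perm_def Let_def by (simp only: if_not_P[OF assms])

lemma std_perm_single:
  assumes "0 < n"
  shows "std_perm [n] i = (if 1 \<le> i \<and> i \<le> n then i mod n + 1 else i)"
proof (cases "1 \<le> i \<and> i \<le> n")
  case True
  then have "std_perm [n] i = (if i = n then 1 else i + 1)"
    using std_perm_at[of 0 "[n]" i] by simp
  then show ?thesis using True assms by auto
next
  case False
  then have "std_perm [n] i = i" by (intro std_perm_out) auto
  then show ?thesis by (simp only: if_not_P[OF False])
qed

lemma sum_rep_nat[simp]: "sum_list (replicate k (d::nat)) = k * d"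
  by (induction k) auto

lemma sum_take_rep: "k \<le> m \<Longrightarrow> sum_list (take k (replicate m d)) = k * d"
  by (simp add: min_def)

lemma std_perm_rep:
  assumes "0 < d"
  shows "std_perm (replicate m d) i =
     (if 1 \<le> i \<and> i \<le> m * d then (if i mod d = 0 then i + 1 - d else i + 1) else i)"
proof (cases "1 \<le> i \<and> i \<le> m * d")
  case True
  define k where "k = (i - 1) div d"
  have dm: "i - 1 = k * d + (i - 1) mod d" unfolding k_def by simp
  have ml: "(i - 1) mod d < d" using assms by simp
  have kl: "k * d < i" using dm True by linarith
  have "i \<le> d + k * d" using dm ml True by linarith
  then have kr: "i \<le> Suc k * d" by simp
  have km: "k < m"
  proof (rule ccontr)
    assume "\<not> k < m" then have "m * d \<le> k * d" by simp
    then show False using kl True by linarith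
  qed
  have e1: "sum_list (take k (replicate m d)) = k * d" using km by (simp add: sum_take_rep)
  have e2: "sum_list (take (Suc k) (replicate m d)) = Suc k * d" using km by (simp add: sum_take_rep)
  define r where "r = i - k * d"
  have ir: "i = k * d + r" using kl unfolding r_def by simp
  have r1: "1 \<le> r" "r \<le> d" using kl kr unfolding r_def by auto
  have imod: "i mod d = r mod d" using ir by simp
  have eqv: "(i = Suc k * d) = (i mod d = 0)"
  proof
    assume "i = Suc k * d" then show "i mod d = 0" by simp
  next
    assume "i mod d = 0"
    then have "r mod d = 0" using imod by simp
    then have "r = d"
    proof (cases "r < d")
      case True then have "r mod d = r" by simp
      then show ?thesis using \<open>r mod d = 0\<close> r1 by simp
    qed (use r1 in simp)
    then show "i = Suc k * d" using ir by simp
  qed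
  have sp: "std_perm (replicate m d) i = (if i = Suc k * d then k * d + 1 else i + 1)"
    using std_perm_at[of k "replicate m d" i] km kl kr e1 e2 by simp
  show ?thesis
  proof (cases "i = Suc k * d")
    case True
    then have a: "i + 1 - d = k * d + 1" by simp
    have "i mod d = 0" using True eqv by simp
    then show ?thesis using sp True a \<open>1 \<le> i \<and> i \<le> m * d\<close> by simp
  next
    case False
    have "i mod d \<noteq> 0" using False eqv by simp
    then show ?thesis using sp False \<open>1 \<le> i \<and> i \<le> m * d\<close> by simp
  qed
next
  case False
  have "\<not> (\<exists>k<length (replicate m d). sum_list (take k (replicate m d)) < i \<and> i \<le> sum_list (take (Suc k) (replicate m d)))"
  proof
    assume "\<exists>k<length (replicate m d). sum_list (take k (replicate m d)) < i \<and> i \<le> sum_list (take (Suc k) (replicate m d))"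
    then obtain k where k: "k < m" "sum_list (take k (replicate m d)) < i"
       "i \<le> sum_list (take (Suc k) (replicate m d))" by auto
    have "sum_list (take (Suc k) (replicate m d)) = Suc k * d" using k(1) by (simp add: sum_take_rep)
    moreover have "Suc k * d \<le> m * d" using k(1) by (intro mult_le_mono1) simp
    ultimately have "i \<le> m * d" using k(3) by (rule_tac order.trans) auto
    moreover have "1 \<le> i" using k(2) by simp
    ultimately show False using False by blast
  qed
  then have "std_perm (replicate m d) i = i" by (rule std_perm_out)
  then show ?thesis by (simp only: if_not_P[OF False])
qed

lemma permutes_funpow': "p permutes S \<Longrightarrow> (p ^^ k) permutes S"
  by (induction k) (auto simp: permutes_id permutes_compose)

lemma lcoset_mem: "mu \<in> lcoset lam (cyc_group \<sigma>) \<longleftrightarrow> (\<exists>a. mu = lam \<circ> \<sigma> ^^ a)"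
  unfolding lcoset_def cyc_group_def by auto

lemma lcoset_self: "lam \<in> lcoset lam (cyc_group \<sigma>)"
  unfolding lcoset_mem by (rule exI[of _ 0]) simp

lemma funpow_id': "(id::'b\<Rightarrow>'b) ^^ k = id"
  by (induction k) auto

lemma lcoset_shift:
  assumes "\<sigma> ^^ N = id" "0 < N"
  shows "lcoset (lam \<circ> \<sigma> ^^ a) (cyc_group \<sigma>) = lcoset lam (cyc_group \<sigma>)"
proof (intro set_eqI iffI)
  fix mu assume "mu \<in> lcoset (lam \<circ> \<sigma> ^^ a) (cyc_group \<sigma>)"
  then obtain b where "mu = lam \<circ> \<sigma> ^^ a \<circ> \<sigma> ^^ b" unfolding lcoset_mem by blast
  then have "mu = lam \<circ> \<sigma> ^^ (a + b)" by (simp add: funpow_add o_assoc)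
  then show "mu \<in> lcoset lam (cyc_group \<sigma>)" unfolding lcoset_mem by blast
next
  fix mu assume "mu \<in> lcoset lam (cyc_group \<sigma>)"
  then obtain b where b: "mu = lam \<circ> \<sigma> ^^ b" unfolding lcoset_mem by blast
  have "N * a \<ge> a" using assms(2) by simp
  have "\<sigma> ^^ (N * a) = id" using assms(1) by (metis funpow_mult funpow_id')
  then have "\<sigma> ^^ a \<circ> \<sigma> ^^ (N * a - a + b) = \<sigma> ^^ b"
    using \<open>N * a \<ge> a\<close> by (metis funpow_add le_add_diff_inverse add.assoc id_comp)
  then have "mu = (lam \<circ> \<sigma> ^^ a) \<circ> \<sigma> ^^ (N * a - a + b)" using b by (simp add: comp_assoc)
  then show "mu \<in> lcoset (lam \<circ> \<sigma> ^^ a) (cyc_group \<sigma>)" unfolding lcoset_mem by blast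
qed

lemma lcoset_eq_imp:
  assumes "lcoset mu (cyc_group \<sigma>) = lcoset lam (cyc_group \<sigma>)"
  shows "\<exists>a. mu = lam \<circ> \<sigma> ^^ a"
proof -
  have "mu \<in> lcoset lam (cyc_group \<sigma>)" using lcoset_self[of mu \<sigma>] assms by simp
  then show ?thesis by (simp only: lcoset_mem)
qed

lemma lcoset_mem_eq:
  assumes "\<sigma> ^^ N = id" "0 < N" "mu \<in> lcoset lam (cyc_group \<sigma>)"
  shows "lcoset mu (cyc_group \<sigma>) = lcoset lam (cyc_group \<sigma>)"
  using assms lcoset_shift unfolding lcoset_mem by blast

definition lab :: "nat \<Rightarrow> 'a set \<Rightarrow> (nat \<Rightarrow> 'a) \<Rightarrow> bool" where
  "lab n U lam \<longleftrightarrow> bij_betw lam {1..n} U \<and> lam \<in> extensional {1..n}"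

lemma lab_comp:
  assumes "lab n U lam" "p permutes {1..n}"
  shows "lab n U (lam \<circ> p)"
  unfolding lab_def
proof
  show "bij_betw (lam \<circ> p) {1..n} U" using assms unfolding lab_def
    by (metis bij_betw_trans permutes_imp_bij)
  show "lam \<circ> p \<in> extensional {1..n}" using assms unfolding lab_def extensional_def
    by (auto simp: permutes_not_in)
qed

definition Pof :: "nat \<Rightarrow> (nat \<Rightarrow> 'a) \<Rightarrow> (nat \<Rightarrow> 'a) \<Rightarrow> nat \<Rightarrow> nat" where
  "Pof n lam mu = (%i. if i \<in> {1..n} then inv_into {1..n} lam (mu i) else i)"

lemma Pof_props:
  assumes "lab n U lam" "lab n U mu"
  shows "Pof n lam mu permutes {1..n}" "lam \<circ> Pof n lam mu = mu"
proof -
  have b1: "bij_betw lam {1..n} U" and b2: "bij_betw mu {1..n} U"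
    and e1: "lam \<in> extensional {1..n}" and e2: "mu \<in> extensional {1..n}"
    using assms unfolding lab_def by auto
  have "bij_betw (inv_into {1..n} lam \<circ> mu) {1..n} {1..n}"
    using b1 b2 by (metis bij_betw_inv_into bij_betw_trans)
  moreover have "bij_betw (Pof n lam mu) {1..n} {1..n} = bij_betw (inv_into {1..n} lam \<circ> mu) {1..n} {1..n}"
    by (rule bij_betw_cong) (simp add: Pof_def)
  ultimately have "bij_betw (Pof n lam mu) {1..n} {1..n}" by simp
  then show "Pof n lam mu permutes {1..n}"
    by (rule bij_imp_permutes) (auto simp add: Pof_def)
  show "lam \<circ> Pof n lam mu = mu"
  proof
    fix i show "(lam \<circ> Pof n lam mu) i = mu i"
    proof (cases "i \<in> {1..n}")
      case True
      then have "mu i \<in> lam ` {1..n}" using b1 b2 bij_betw_apply bij_betw_imp_surj_on by metis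
      then show ?thesis using True by (simp add: Pof_def f_inv_into_f)
    next
      case False
      then show ?thesis using e1 e2 by (auto simp add: Pof_def extensional_def)
    qed
  qed
qed

lemma lab_cancel:
  assumes "lab n U lam" "p permutes {1..n}" "q permutes {1..n}" "lam \<circ> p = lam \<circ> q"
  shows "p = q"
proof
  fix i show "p i = q i"
  proof (cases "i \<in> {1..n}")
    case True
    then have "p i \<in> {1..n}" "q i \<in> {1..n}"
      using permutes_in_image[OF assms(2)] permutes_in_image[OF assms(3)] by blast+
    moreover have "lam (p i) = lam (q i)" using assms(4) by (metis comp_apply)
    ultimately show ?thesis using assms(1) unfolding lab_def bij_betw_def inj_on_def by blast
  next
    case False
    then show ?thesis using assms(2,3) by (simp add: permutes_not_in)
  qed
qed

lemma perm_cancel_right: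
  assumes "p permutes A" "f \<circ> p = g \<circ> p"
  shows "f = g"
proof -
  have "f \<circ> p \<circ> inv p = g \<circ> p \<circ> inv p" using assms(2) by simp
  then show ?thesis using permutes_inv_o(1)[OF assms(1)] by (simp add: o_assoc[symmetric])
qed

locale stg =
  fixes n :: nat
  assumes npos: "0 < n"
begin

definition c :: "nat \<Rightarrow> nat" where "c = std_perm [n]"

lemma c_apply: "c i = (if i \<in> {1..n} then i mod n + 1 else i)"
proof (cases "i \<in> {1..n}")
  case True
  then have h: "1 \<le> i \<and> i \<le> n" by simp
  show ?thesis unfolding c_def std_perm_single[OF npos] if_P[OF h] if_P[OF True] ..
next
  case False
  then have h: "\<not> (1 \<le> i \<and> i \<le> n)" by simp
  show ?thesis unfolding c_def std_perm_single[OF npos] if_not_P[OF h] if_not_P[OF False] ..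
qed

lemma c_out: "i \<notin> {1..n} \<Longrightarrow> c i = i"
  by (subst c_apply) (simp only: if_not_P if_False)

lemma c_in: "i \<in> {1..n} \<Longrightarrow> c i = i mod n + 1"
  by (subst c_apply) (simp only: if_P if_True)

lemma cpow_out: "i \<notin> {1..n} \<Longrightarrow> (c ^^ a) i = i"
  by (induction a) (auto simp: c_out)

lemma cpow_in_eq: "i \<in> {1..n} \<Longrightarrow> (c ^^ a) i = (i - 1 + a) mod n + 1"
proof (induction a)
  case 0
  then have "i - 1 < n" by auto
  then show ?case using 0 by auto
next
  case (Suc a)
  have "(c ^^ Suc a) i = c ((i - 1 + a) mod n + 1)" using Suc by simp
  also have "\<dots> = ((i - 1 + a) mod n + 1) mod n + 1"
  proof (rule c_in)
    have "(i - 1 + a) mod n < n" using npos by simp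
    then show "(i - 1 + a) mod n + 1 \<in> {1..n}" by simp
  qed
  also have "\<dots> = (i - 1 + Suc a) mod n + 1" by (simp add: mod_Suc_eq)
  finally show ?case .
qed

lemma cpow: "(c ^^ a) i = (if i \<in> {1..n} then (i - 1 + a) mod n + 1 else i)"
  using cpow_in_eq cpow_out by simp

lemma cpow_in: "i \<in> {1..n} \<Longrightarrow> (c ^^ a) i \<in> {1..n}"
proof -
  assume "i \<in> {1..n}"
  moreover have "(i - 1 + a) mod n < n" using npos by simp
  then have "(i - 1 + a) mod n + 1 \<in> {1..n}" by simp
  ultimately show ?thesis by (simp only: cpow_in_eq)
qed

lemma c_permutes: "c permutes {1..n}"
proof (rule bij_imp_permutes)
  have inj: "inj_on c {1..n}"
  proof (rule inj_onI)
    fix x y assume xy: "x \<in> {1..n}" "y \<in> {1..n}" "c x = c y"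
    then have m: "x mod n = y mod n" using xy by (simp add: c_in)
    have h: "z = (if z mod n = 0 then n else z mod n)" if "z \<in> {1..n}" for z
    proof (cases "z < n")
      case True then show ?thesis using that by auto
    next
      case False then have "z = n" using that by auto
      then show ?thesis by simp
    qed
    have "x = (if x mod n = 0 then n else x mod n)" by (rule h[OF xy(1)])
    also have "\<dots> = (if y mod n = 0 then n else y mod n)" by (simp only: m)
    also have "\<dots> = y" by (rule sym[OF h[OF xy(2)]])
    finally show "x = y" .
  qed
  have "c ` {1..n} \<subseteq> {1..n}" using cpow_in[of _ 1] by auto
  then have "c ` {1..n} = {1..n}" using inj by (simp add: endo_inj_surj)
  then show "bij_betw c {1..n} {1..n}" using inj by (simp add: bij_betw_def)
  show "\<And>x. x \<notin> {1..n} \<Longrightarrow> c x = x" by (rule c_out)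
qed

lemma cpow_permutes: "(c ^^ a) permutes {1..n}"
  using permutes_funpow'[OF c_permutes] .

lemma cpow_n: "c ^^ n = id"
proof
  fix i show "(c ^^ n) i = id i"
  proof (cases "i \<in> {1..n}")
    case True then have "i - 1 < n" by auto
    then have "(i - 1 + n) mod n = i - 1" by (simp only: mod_add_self2 mod_less)
    then have "(i - 1 + n) mod n + 1 = i" using True by (simp only:) auto
    then show ?thesis using True by (simp only: cpow_in_eq id_apply)
  qed (simp add: cpow_out)
qed

lemma cpow_mod: "c ^^ a = c ^^ (a mod n)"
proof
  fix i show "(c ^^ a) i = (c ^^ (a mod n)) i"
  proof (cases "i \<in> {1..n}")
    case True then show ?thesis by (simp only: cpow_in_eq mod_add_right_eq)
  next
    case False then show ?thesis by (simp add: cpow_out)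
  qed
qed

lemma cpow_add: "c ^^ a \<circ> c ^^ b = c ^^ (a + b)"
  by (simp add: funpow_add)

lemma cpow_inj: assumes "c ^^ a = c ^^ b" shows "a mod n = b mod n"
proof -
  have "(c ^^ a) 1 = (c ^^ b) 1" using assms by simp
  then show ?thesis using npos by (simp add: cpow_in_eq)
qed

lemma cpow_neg: "c ^^ (n - a mod n) \<circ> c ^^ a = id"
proof -
  have "c ^^ (n - a mod n) \<circ> c ^^ a = c ^^ ((n - a mod n + a) mod n)"
    by (simp only: cpow_add) (rule cpow_mod)
  also have "(n - a mod n + a) mod n = 0"
  proof -
    have "a mod n < n" using npos by simp
    have e: "a div n * n + a mod n = a" by (rule div_mult_mod_eq)
    have f: "n * Suc (a div n) = n + a div n * n" by simp
    have "n - a mod n + a = n * (Suc (a div n))" using e f \<open>a mod n < n\<close> by linarith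
    then show ?thesis by simp
  qed
  finally show ?thesis by (simp only: funpow.simps(1))
qed

lemma cyc_c: "cyc_group c = {c ^^ a | a. a < n}"
  unfolding cyc_group_def
proof (intro set_eqI iffI)
  fix x assume "x \<in> range (\<lambda>k. c ^^ k)"
  then obtain k where "x = c ^^ k" by auto
  then have "x = c ^^ (k mod n)" using cpow_mod by simp
  then show "x \<in> {c ^^ a |a. a < n}" using npos by auto
qed auto

lemma stg_act_c:
  assumes "P permutes {1..n}"
  shows "stg_act n r k P = c ^^ k \<circ> P \<circ> c ^^ r"
proof
  fix i show "stg_act n r k P i = (c ^^ k \<circ> P \<circ> c ^^ r) i"
  proof (cases "i \<in> {1..n}")
    case True
    have l: "stg_act n r k P i = (P ((i - 1 + r) mod n + 1) - 1 + k) mod n + 1"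
      unfolding stg_act_def if_P[OF True] ..
    have x: "(c ^^ r) i = (i - 1 + r) mod n + 1" using True by (rule cpow_in_eq)
    have "(c ^^ r) i \<in> {1..n}" using True by (rule cpow_in)
    then have "P ((c ^^ r) i) \<in> {1..n}" using permutes_in_image[OF assms] by blast
    then have "(c ^^ k) (P ((c ^^ r) i)) = (P ((c ^^ r) i) - 1 + k) mod n + 1" by (rule cpow_in_eq)
    then show ?thesis using l x by simp
  next
    case False
    have l: "stg_act n r k P i = i"
      unfolding stg_act_def if_not_P[OF False] ..
    have "(c ^^ r) i = i" using False by (rule cpow_out)
    moreover have "P i = i" using permutes_not_in[OF assms False] .
    moreover have "(c ^^ k) i = i" using False by (rule cpow_out)
    ultimately show ?thesis using l by simp
  qed
qed

end

lemma subgroup_mod: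
  fixes R :: "nat set" and n :: nat
  assumes n: "0 < n" and sub: "R \<subseteq> {..<n}" and z: "0 \<in> R"
    and cl: "\<And>a b. a \<in> R \<Longrightarrow> b \<in> R \<Longrightarrow> (a + b) mod n \<in> R"
  shows "\<exists>g. 0 < g \<and> g dvd n \<and> R = {r. r < n \<and> g dvd r}"
proof -
  have mult: "(t * a) mod n \<in> R" if "a \<in> R" for t a
  proof (induction t)
    case 0 then show ?case using z by simp
  next
    case (Suc t)
    have "((t * a) mod n + a) mod n \<in> R" using cl[OF Suc that] .
    moreover have "((t * a) mod n + a) mod n = (Suc t * a) mod n"
      by (simp add: mod_add_left_eq add.commute[of "t * a"])
    ultimately show ?case by simp
  qed
  have lin: "(x * a + y * b) mod n \<in> R" if "a \<in> R" "b \<in> R" for x y a b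
  proof -
    have "((x * a) mod n + (y * b) mod n) mod n \<in> R" using cl[OF mult[OF that(1)] mult[OF that(2)]] .
    then show ?thesis by (simp add: mod_add_eq)
  qed
  define T where "T = {x. 0 < x \<and> (x \<in> R \<or> x = n)}"
  define g where "g = Least (\<lambda>x. x \<in> T)"
  have nT: "n \<in> T" using n unfolding T_def by simp
  have gT: "g \<in> T" unfolding g_def using nT by (rule LeastI)
  have gle: "g \<le> h" if "h \<in> T" for h unfolding g_def using that by (rule Least_le)
  have gpos: "0 < g" using gT unfolding T_def by simp
  have gn: "g \<le> n" using gle[OF nT] .
  have gR: "g \<in> R" if "g \<noteq> n" using gT that unfolding T_def by simp
  have gR_lt: "g < n" if "g \<noteq> n" using gn that by simp
  have hle: "g \<le> h" if "h \<in> R" "0 < h" for h using gle that unfolding T_def by simp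
  have A: "g dvd r" if r: "r \<in> R" for r
  proof (cases "r = 0")
    case True then show ?thesis by simp
  next
    case False
    have rn: "r < n" using r sub by auto
    obtain x y where xy: "r * x = g * y + gcd r g" using bezout_nat[OF False] by blast
    define h where "h = gcd r g"
    have hpos: "0 < h" unfolding h_def using False by simp
    have hr: "h \<le> r" unfolding h_def using False by (simp add: gcd_le1_nat)
    have hn: "h < n" using hr rn by simp
    have hg: "h dvd g" unfolding h_def by simp
    have hR: "h \<in> R"
    proof (cases "g = n")
      case True
      have "(x * r) mod n = (g * y + h) mod n" using xy unfolding h_def by (simp add: mult.commute)
      also have "\<dots> = h mod n" using True by simp
      also have "\<dots> = h" using hn by simp
      finally have "(x * r) mod n = h" .
      moreover have "(x * r) mod n \<in> R" using mult[OF r] .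
      ultimately show ?thesis by simp
    next
      case False
      have "x * r + (y * (n - 1)) * g = g * y + h + g * y * (n - 1)"
        using xy unfolding h_def by (simp add: algebra_simps)
      also have "\<dots> = h + (g * y) * n"
      proof -
        have "g * y + g * y * (n - 1) = (g * y) * n" using n
          by (metis mult.right_neutral distrib_left Suc_diff_1 add.commute mult_Suc_right)
        then show ?thesis by simp
      qed
      finally have e: "x * r + (y * (n - 1)) * g = h + (g * y) * n" .
      have "(x * r + (y * (n - 1)) * g) mod n = h" using e hn by simp
      moreover have "(x * r + (y * (n - 1)) * g) mod n \<in> R" using lin[OF r gR[OF False]] .
      ultimately show ?thesis by simp
    qed
    have "g \<le> h" using hle[OF hR hpos] .
    moreover have "h \<le> g" using hg gpos by (simp add: dvd_imp_le)
    ultimately have "h = g" by simp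
    then show ?thesis unfolding h_def by (metis gcd_dvd1)
  qed
  have B: "g dvd n"
  proof (cases "g = n")
    case True then show ?thesis by simp
  next
    case False
    have g0: "g \<noteq> 0" using gpos by simp
    obtain x y where xy: "g * x = n * y + gcd g n" using bezout_nat[OF g0] by blast
    define h where "h = gcd g n"
    have hpos: "0 < h" unfolding h_def using g0 by simp
    have hg: "h \<le> g" unfolding h_def using g0 by (simp add: gcd_le1_nat)
    have hn: "h < n" using hg gR_lt[OF False] by simp
    have "(x * g) mod n = (n * y + h) mod n" using xy unfolding h_def by (simp add: mult.commute)
    also have "\<dots> = h" using hn by simp
    finally have "(x * g) mod n = h" .
    moreover have "(x * g) mod n \<in> R" using mult[OF gR[OF False]] .
    ultimately have hR: "h \<in> R" by simp
    have "g \<le> h" using hle[OF hR hpos] .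
    then have "h = g" using hg by simp
    then show ?thesis unfolding h_def by (metis gcd_dvd2)
  qed
  have C: "r \<in> R" if rl: "r < n" and gd: "g dvd r" for r
  proof (cases "g = n")
    case True
    then have "r = 0" using rl gd by (metis dvd_imp_le not_less zero_less_iff_neq_zero)
    then show ?thesis using z by simp
  next
    case False
    obtain t where t: "r = t * g" using gd by (metis dvdE mult.commute)
    have "(t * g) mod n \<in> R" using mult[OF gR[OF False]] .
    then show ?thesis using t rl by simp
  qed
  have "R = {r. r < n \<and> g dvd r}"
  proof (intro set_eqI iffI)
    fix r assume "r \<in> R" then show "r \<in> {r. r < n \<and> g dvd r}" using A sub by auto
  next
    fix r assume "r \<in> {r. r < n \<and> g dvd r}" then show "r \<in> R" using C by auto
  qed
  then show ?thesis using gpos B by blast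
qed

lemma card_multiples:
  fixes g n :: nat
  assumes "0 < g" "g dvd n"
  shows "card {r. r < n \<and> g dvd r} = n div g"
proof -
  have "{r. r < n \<and> g dvd r} = (\<lambda>t. t * g) ` {..<n div g}"
  proof (intro set_eqI iffI)
    fix r assume "r \<in> {r. r < n \<and> g dvd r}"
    then obtain t where t: "r = t * g" "t * g < n" by (metis (mono_tags, lifting) dvdE mem_Collect_eq mult.commute)
    have "n = (n div g) * g" using assms by simp
    then have "t < n div g" using t(2) assms(1) by (metis mult_less_cancel2)
    then show "r \<in> (\<lambda>t. t * g) ` {..<n div g}" using t by auto
  next
    fix r assume "r \<in> (\<lambda>t. t * g) ` {..<n div g}"
    then obtain t where t: "r = t * g" "t < n div g" by auto
    have "n = (n div g) * g" using assms by simp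
    then have "t * g < n" using t(2) assms(1) by (metis mult_less_cancel2)
    then show "r \<in> {r. r < n \<and> g dvd r}" using t by auto
  qed
  moreover have "inj_on (\<lambda>t. t * g) {..<n div g}" using assms(1) by (auto intro: inj_onI)
  ultimately show ?thesis by (simp add: card_image)
qed

context stg begin

definition orb :: "(nat \<Rightarrow> nat) \<Rightarrow> (nat \<Rightarrow> nat) set" where
  "orb P = {c ^^ k \<circ> P \<circ> c ^^ r | k r. True}"

lemma cpow_neg': "c ^^ a \<circ> c ^^ (n - a mod n) = id"
  using cpow_neg[of a] by (simp add: cpow_add add.commute)

lemma stg_orbit_eq:
  assumes "P permutes {1..n}" shows "stg_orbit n P = orb P"
proof (intro set_eqI iffI)
  fix Q assume "Q \<in> stg_orbit n P"
  then obtain r k where "Q = stg_act n r k P" unfolding stg_orbit_def by blast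
  then show "Q \<in> orb P" unfolding orb_def using stg_act_c[OF assms] by blast
next
  fix Q assume "Q \<in> orb P"
  then obtain k r where Q: "Q = c ^^ k \<circ> P \<circ> c ^^ r" unfolding orb_def by blast
  then have "Q = c ^^ (k mod n) \<circ> P \<circ> c ^^ (r mod n)" using cpow_mod[of k] cpow_mod[of r] by simp
  also have "\<dots> = stg_act n (r mod n) (k mod n) P" using stg_act_c[OF assms] by simp
  moreover have "r mod n < n" "k mod n < n" using npos by simp_all
  ultimately show "Q \<in> stg_orbit n P" unfolding stg_orbit_def by blast
qed

lemma orb_self: "P \<in> orb P"
  unfolding orb_def by (rule CollectI, rule exI[of _ 0], rule exI[of _ 0]) simp

lemma orb_perm: "P permutes {1..n} \<Longrightarrow> Q \<in> orb P \<Longrightarrow> Q permutes {1..n}"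
  unfolding orb_def using cpow_permutes by (auto intro!: permutes_compose)

lemma orb_shift:
  assumes "P permutes {1..n}"
  shows "orb (c ^^ k \<circ> P \<circ> c ^^ r) = orb P"
proof (intro set_eqI iffI)
  fix Q assume "Q \<in> orb (c ^^ k \<circ> P \<circ> c ^^ r)"
  then obtain k' r' where Q: "Q = c ^^ k' \<circ> (c ^^ k \<circ> P \<circ> c ^^ r) \<circ> c ^^ r'" unfolding orb_def by blast
  then have "Q = c ^^ (k' + k) \<circ> P \<circ> c ^^ (r + r')" by (simp add: funpow_add comp_assoc)
  then show "Q \<in> orb P" unfolding orb_def by blast
next
  fix Q assume "Q \<in> orb P"
  then obtain k' r' where Q: "Q = c ^^ k' \<circ> P \<circ> c ^^ r'" unfolding orb_def by blast
  have e1: "c ^^ (k' + (n - k mod n)) \<circ> c ^^ k = c ^^ k'"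
    using cpow_neg[of k] by (simp add: funpow_add comp_assoc)
  have e2: "c ^^ r \<circ> c ^^ ((n - r mod n) + r') = c ^^ r'"
    using cpow_neg'[of r] by (simp add: funpow_add comp_assoc[symmetric])
  have "c ^^ (k' + (n - k mod n)) \<circ> (c ^^ k \<circ> P \<circ> c ^^ r) \<circ> c ^^ ((n - r mod n) + r')
      = (c ^^ (k' + (n - k mod n)) \<circ> c ^^ k) \<circ> P \<circ> (c ^^ r \<circ> c ^^ ((n - r mod n) + r'))"
    by (simp add: comp_assoc)
  also have "\<dots> = Q" using e1 e2 Q by simp
  finally show "Q \<in> orb (c ^^ k \<circ> P \<circ> c ^^ r)" unfolding orb_def by blast
qed

lemma orb_mem_eq:
  assumes "P permutes {1..n}" "Q \<in> orb P"
  shows "orb Q = orb P"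
proof -
  obtain k r where "Q = c ^^ k \<circ> P \<circ> c ^^ r" using assms(2) unfolding orb_def by blast
  then show ?thesis using orb_shift[OF assms(1)] by simp
qed

lemma SP_mem:
  assumes "Q \<in> SP n" "P \<in> Q"
  shows "P permutes {1..n}" "stg_orbit n P = Q"
proof -
  obtain P' where P': "P' permutes {1..n}" "Q = stg_orbit n P'" using assms(1) unfolding SP_def by blast
  then have Q: "Q = orb P'" using stg_orbit_eq by simp
  show "P permutes {1..n}" using orb_perm[OF P'(1)] assms(2) Q by simp
  then show "stg_orbit n P = Q" using stg_orbit_eq orb_mem_eq[OF P'(1)] assms(2) Q by simp
qed

lemma SP_some:
  assumes "Q \<in> SP n" shows "(SOME P. P \<in> Q) \<in> Q"
proof -
  obtain P' where P': "P' permutes {1..n}" "Q = stg_orbit n P'" using assms(1) unfolding SP_def by blast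
  then have "P' \<in> Q" using stg_orbit_eq orb_self by simp
  then show ?thesis by (rule someI[where P="\<lambda>P. P \<in> Q"])
qed

lemma stab_eq:
  assumes "P permutes {1..n}"
  shows "stg_stab n P = {(r, k). r < n \<and> k < n \<and> c ^^ k \<circ> P \<circ> c ^^ r = P}"
  unfolding stg_stab_def using stg_act_c[OF assms] by simp

definition Rs :: "(nat \<Rightarrow> nat) \<Rightarrow> nat set" where
  "Rs P = fst ` stg_stab n P"

lemma Rs_mem:
  assumes "P permutes {1..n}" "r < n"
  shows "r \<in> Rs P \<longleftrightarrow> (\<exists>k<n. c ^^ k \<circ> P \<circ> c ^^ r = P)"
  unfolding Rs_def stab_eq[OF assms(1)] using assms(2) by force

lemma stab_card:
  assumes "P permutes {1..n}"
  shows "card (stg_stab n P) = card (Rs P)"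
proof -
  have "inj_on fst (stg_stab n P)"
  proof (rule inj_onI)
    fix x y assume x: "x \<in> stg_stab n P" and y: "y \<in> stg_stab n P" and e: "fst x = fst y"
    obtain r k where rk: "x = (r, k)" by (cases x)
    obtain r' k' where rk': "y = (r', k')" by (cases y)
    have r: "r' = r" using e rk rk' by simp
    have h1: "c ^^ k \<circ> (P \<circ> c ^^ r) = P" "k < n" using x rk unfolding stab_eq[OF assms] by (auto simp: comp_assoc)
    have h2: "c ^^ k' \<circ> (P \<circ> c ^^ r) = P" "k' < n" using y rk' r unfolding stab_eq[OF assms] by (auto simp: comp_assoc)
    have "(P \<circ> c ^^ r) permutes {1..n}" using cpow_permutes assms by (rule permutes_compose)
    then have "c ^^ k = c ^^ k'" using h1(1) h2(1) by (metis perm_cancel_right)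
    then have "k mod n = k' mod n" by (rule cpow_inj)
    then have "k = k'" using h1(2) h2(2) by simp
    then show "x = y" using rk rk' r by simp
  qed
  then show ?thesis unfolding Rs_def by (simp add: card_image)
qed

lemma stab_struct:
  assumes "P permutes {1..n}"
  defines "d \<equiv> card (stg_stab n P)"
  shows "0 < d" "d dvd n" "\<And>r. r < n \<Longrightarrow> r \<in> Rs P \<longleftrightarrow> (n div d) dvd r"
proof -
  have sub: "Rs P \<subseteq> {..<n}" unfolding Rs_def stg_stab_def by auto
  have "c ^^ 0 \<circ> P \<circ> c ^^ 0 = P" by simp
  then have z: "0 \<in> Rs P" using Rs_mem[OF assms(1) npos] npos by blast
  have cl: "(a + b) mod n \<in> Rs P" if a: "a \<in> Rs P" and b: "b \<in> Rs P" for a b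
  proof -
    have an: "a < n" "b < n" using a b sub by auto
    obtain k1 where k1: "k1 < n" "c ^^ k1 \<circ> P \<circ> c ^^ a = P" using Rs_mem[OF assms(1) an(1)] a by blast
    obtain k2 where k2: "k2 < n" "c ^^ k2 \<circ> P \<circ> c ^^ b = P" using Rs_mem[OF assms(1) an(2)] b by blast
    have "c ^^ (k2 + k1) \<circ> P \<circ> c ^^ (a + b) = c ^^ k2 \<circ> (c ^^ k1 \<circ> P \<circ> c ^^ a) \<circ> c ^^ b"
      by (simp add: funpow_add comp_assoc)
    also have "\<dots> = P" using k1 k2 by simp
    finally have "c ^^ ((k2 + k1) mod n) \<circ> P \<circ> c ^^ ((a + b) mod n) = P"
      using cpow_mod[of "k2 + k1"] cpow_mod[of "a + b"] by simp
    moreover have "(k2 + k1) mod n < n" "(a + b) mod n < n" using npos by simp_all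
    ultimately show ?thesis using Rs_mem[OF assms(1)] by blast
  qed
  obtain g where g: "0 < g" "g dvd n" "Rs P = {r. r < n \<and> g dvd r}"
    using subgroup_mod[OF npos sub z cl] by blast
  have dg: "d = n div g" unfolding d_def stab_card[OF assms(1)] g(3) using card_multiples[OF g(1,2)] .
  have ng: "n = d * g" using dg g(2) by simp
  show "0 < d" using ng npos by (cases d) auto
  show "d dvd n" using ng by simp
  have "n div d = g" using ng \<open>0 < d\<close> by simp
  then show "\<And>r. r < n \<Longrightarrow> r \<in> Rs P \<longleftrightarrow> (n div d) dvd r" using g(3) by simp
qed

end

context stg begin

definition tau :: "nat \<Rightarrow> nat \<Rightarrow> nat" where
  "tau d i = (if i \<in> {1..n} then (i - 1) div d + ((i - 1) mod d) * (n div d) + 1 else i)"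

definition sig :: "nat \<Rightarrow> nat \<Rightarrow> nat" where
  "sig d = std_perm (replicate (n div d) d)"

lemma decomp:
  assumes "0 < d" "d dvd n" "i \<in> {1..n}"
  shows "\<exists>q r. q < n div d \<and> r < d \<and> i = q * d + r + 1"
proof -
  define m where "m = n div d"
  have nm: "n = m * d" using assms(2) unfolding m_def by simp
  have i1: "i - 1 < m * d" using assms(3) nm by auto
  have "(i - 1) div d < m" using i1 assms(1) by (simp add: div_less_iff_less_mult)
  moreover have "(i - 1) mod d < d" using assms(1) by simp
  moreover have "i = (i - 1) div d * d + (i - 1) mod d + 1" using assms(3) by simp
  ultimately show ?thesis unfolding m_def by blast
qed

lemma qr_in:
  assumes "0 < d" "d dvd n" "q < n div d" "r < d"
  shows "q * d + r + 1 \<in> {1..n}" "q + r * (n div d) + 1 \<in> {1..n}"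
proof -
  define m where "m = n div d"
  have nm: "n = m * d" using assms(2) unfolding m_def by simp
  have q: "q < m" using assms(3) unfolding m_def .
  have "Suc q \<le> m" using q by simp
  then have "Suc q * d \<le> m * d" by (rule mult_le_mono1)
  then have "q * d + d \<le> n" using nm by simp
  then show "q * d + r + 1 \<in> {1..n}" using assms(4) by simp
  have "Suc r \<le> d" using assms(4) by simp
  then have "Suc r * m \<le> d * m" by (rule mult_le_mono1)
  then have "r * m + m \<le> n" using nm by (simp add: mult.commute)
  then show "q + r * (n div d) + 1 \<in> {1..n}" using q unfolding m_def[symmetric] by simp
qed

lemma tau_qr:
  assumes "0 < d" "d dvd n" "q < n div d" "r < d"
  shows "tau d (q * d + r + 1) = q + r * (n div d) + 1"
proof -
  have "q * d + r + 1 \<in> {1..n}" using qr_in[OF assms] by simp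
  moreover have "(q * d + r + 1 - 1) div d = q" using assms(1,4) by simp
  moreover have "(q * d + r + 1 - 1) mod d = r" using assms(1,4) by simp
  ultimately show ?thesis unfolding tau_def by simp
qed

lemma tau_out: "i \<notin> {1..n} \<Longrightarrow> tau d i = i"
  unfolding tau_def by (rule if_not_P)

lemma tau_permutes:
  assumes "0 < d" "d dvd n"
  shows "tau d permutes {1..n}"
proof (rule bij_imp_permutes)
  define m where "m = n div d"
  have m0: "0 < m" using assms npos unfolding m_def
    by (metis dvd_div_eq_0_iff gr0I less_not_refl2)
  have img: "tau d i \<in> {1..n}" if ii: "i \<in> {1..n}" for i
  proof -
    obtain q r where qr: "q < n div d" "r < d" "i = q * d + r + 1" using decomp[OF assms ii] by blast
    have "tau d i = q + r * (n div d) + 1" using tau_qr[OF assms qr(1,2)] qr(3) by simp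
    then show ?thesis using qr_in(2)[OF assms qr(1,2)] by simp
  qed
  have inj: "inj_on (tau d) {1..n}"
  proof (rule inj_onI)
    fix x y assume x: "x \<in> {1..n}" and y: "y \<in> {1..n}" and e: "tau d x = tau d y"
    obtain q r where qr: "q < m" "r < d" "x = q * d + r + 1" using decomp[OF assms x] unfolding m_def by blast
    obtain q' r' where qr': "q' < m" "r' < d" "y = q' * d + r' + 1" using decomp[OF assms y] unfolding m_def by blast
    have "q + r * m = q' + r' * m" using e tau_qr[OF assms, of q r] tau_qr[OF assms, of q' r'] qr qr'
      unfolding m_def by simp
    then have "(q + r * m) mod m = (q' + r' * m) mod m" "(q + r * m) div m = (q' + r' * m) div m" by simp_all
    then have "q = q'" "r = r'" using qr(1) qr'(1) m0 by simp_all
    then show "x = y" using qr(3) qr'(3) by simp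
  qed
  have "tau d ` {1..n} \<subseteq> {1..n}" using img by auto
  then have "tau d ` {1..n} = {1..n}" using inj by (simp add: endo_inj_surj)
  then show "bij_betw (tau d) {1..n} {1..n}" using inj by (simp add: bij_betw_def)
  show "\<And>x. x \<notin> {1..n} \<Longrightarrow> tau d x = x" by (rule tau_out)
qed

lemma tau_sig:
  assumes "0 < d" "d dvd n"
  shows "tau d \<circ> sig d = c ^^ (n div d) \<circ> tau d"
proof
  fix i
  define m where "m = n div d"
  have nm: "n = m * d" using assms(2) unfolding m_def by simp
  have sig_eq: "sig d j = (if 1 \<le> j \<and> j \<le> m * d then (if j mod d = 0 then j + 1 - d else j + 1) else j)" for j
    unfolding sig_def m_def using std_perm_rep[OF assms(1)] by simp
  show "(tau d \<circ> sig d) i = (c ^^ (n div d) \<circ> tau d) i"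
  proof (cases "i \<in> {1..n}")
    case False
    then have "sig d i = i" using sig_eq[of i] nm by auto
    then show ?thesis using False by (simp add: tau_out cpow_out)
  next
    case True
    obtain q r where qr: "q < m" "r < d" "i = q * d + r + 1" using decomp[OF assms True] unfolding m_def by blast
    have ti: "tau d i = q + r * m + 1" using tau_qr[OF assms] qr unfolding m_def by simp
    have tin: "tau d i \<in> {1..n}" using ti qr_in(2)[OF assms, of q r] qr unfolding m_def by simp
    have ct: "(c ^^ m) (tau d i) = (q + r * m + m) mod n + 1"
      using cpow_in_eq[OF tin] ti by simp
    show ?thesis
    proof (cases "Suc r < d")
      case True
      have "i mod d = Suc r" using qr True by simp
      then have "sig d i = q * d + Suc r + 1" using sig_eq[of i] \<open>i \<in> {1..n}\<close> nm qr(3) by auto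
      moreover have "tau d (q * d + Suc r + 1) = q + Suc r * m + 1"
        using tau_qr[OF assms, of q "Suc r"] qr(1) True unfolding m_def by simp
      ultimately have "tau d (sig d i) = q + Suc r * m + 1" by simp
      moreover have "q + r * m + m < n"
      proof -
        have "Suc (Suc r) \<le> d" using True by simp
        then have "Suc (Suc r) * m \<le> d * m" by (rule mult_le_mono1)
        then show ?thesis using qr(1) nm by (simp add: mult.commute)
      qed
      ultimately show ?thesis using ct unfolding m_def[symmetric] by simp
    next
      case False
      then have rd: "Suc r = d" using qr(2) by simp
      then have "i = Suc q * d" using qr(3) by simp
      then have "i mod d = 0" by simp
      then have "sig d i = q * d + 0 + 1" using sig_eq[of i] \<open>i \<in> {1..n}\<close> nm \<open>i = Suc q * d\<close> by auto
      moreover have "tau d (q * d + 0 + 1) = q + 0 * m + 1"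
        using tau_qr[OF assms, of q 0] qr(1) assms(1) unfolding m_def by simp
      ultimately have "tau d (sig d i) = q + 1" by simp
      moreover have "(q + r * m + m) mod n = q"
      proof -
        have "r * m + m = Suc r * m" by simp
        also have "\<dots> = n" using rd nm by simp
        finally have "q + r * m + m = q + n" by simp
        then have "(q + r * m + m) mod n = (q + n) mod n" by (simp only:)
        also have "\<dots> = q"
        proof -
          have "q < n" using qr(1) div_le_dividend[of n d] unfolding m_def by linarith
          then show ?thesis by simp
        qed
        finally show ?thesis .
      qed
      ultimately show ?thesis using ct unfolding m_def[symmetric] by simp
    qed
  qed
qed

end

context stg begin

lemma tau_sigpow:
  assumes "0 < d" "d dvd n"
  shows "tau d \<circ> sig d ^^ t = c ^^ (n div d * t) \<circ> tau d"
proof (induction t)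
  case 0 then show ?case by simp
next
  case (Suc t)
  have "tau d \<circ> sig d ^^ Suc t = (tau d \<circ> sig d) \<circ> sig d ^^ t" by (simp add: comp_assoc)
  also have "\<dots> = c ^^ (n div d) \<circ> (tau d \<circ> sig d ^^ t)" using tau_sig[OF assms] by (simp add: comp_assoc)
  also have "\<dots> = c ^^ (n div d) \<circ> c ^^ (n div d * t) \<circ> tau d" by (simp only: comp_assoc Suc.IH)
  also have "\<dots> = c ^^ (n div d * Suc t) \<circ> tau d" by (simp add: cpow_add)
  finally show ?case .
qed

lemma sig_conj:
  assumes "0 < d" "d dvd n"
  shows "sig d = inv (tau d) \<circ> c ^^ (n div d) \<circ> tau d"
proof -
  have "inv (tau d) \<circ> (tau d \<circ> sig d) = inv (tau d) \<circ> (c ^^ (n div d) \<circ> tau d)"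
    using tau_sig[OF assms] by simp
  then show ?thesis using permutes_inv_o(2)[OF tau_permutes[OF assms]] by (simp add: comp_assoc[symmetric])
qed

lemma sig_permutes:
  assumes "0 < d" "d dvd n"
  shows "sig d permutes {1..n}"
  unfolding sig_conj[OF assms]
  by (intro permutes_compose tau_permutes[OF assms] cpow_permutes permutes_inv)

lemma sig_pow_d:
  assumes "0 < d" "d dvd n"
  shows "sig d ^^ d = id"
proof -
  have "tau d \<circ> sig d ^^ d = c ^^ (n div d * d) \<circ> tau d" by (rule tau_sigpow[OF assms])
  also have "n div d * d = n" using assms(2) by simp
  finally have "tau d \<circ> sig d ^^ d = c ^^ n \<circ> tau d" .
  then have "tau d \<circ> sig d ^^ d = tau d" by (simp only: cpow_n id_comp)
  then have "inv (tau d) \<circ> (tau d \<circ> sig d ^^ d) = inv (tau d) \<circ> tau d" by simp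
  then show ?thesis using permutes_inv_o(2)[OF tau_permutes[OF assms]] by (simp add: comp_assoc[symmetric])
qed

lemma perm_pow_permutes: "\<sigma> permutes {1..n} \<Longrightarrow> h \<in> cyc_group \<sigma> \<Longrightarrow> h permutes {1..n}"
  unfolding cyc_group_def using permutes_funpow' by blast

lemma lcoset_lab:
  assumes "lab n U lam" "\<sigma> permutes {1..n}" "mu \<in> lcoset lam (cyc_group \<sigma>)"
  shows "lab n U mu"
  using assms lab_comp permutes_funpow' unfolding lcoset_mem by blast

lemma restrict_comp_perm:
  assumes "p permutes {1..n}"
  shows "restrict (f \<circ> lam \<circ> p) {1..n} = restrict (f \<circ> lam) {1..n} \<circ> p"
proof
  fix i show "restrict (f \<circ> lam \<circ> p) {1..n} i = (restrict (f \<circ> lam) {1..n} \<circ> p) i"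
  proof (cases "i \<in> {1..n}")
    case True then have "p i \<in> {1..n}" using permutes_in_image[OF assms] by blast
    then show ?thesis using True by simp
  next
    case False then have "p i = i" using permutes_not_in[OF assms] by blast
    then show ?thesis using False by auto
  qed
qed

lemma transport_lcoset:
  assumes "\<sigma> permutes {1..n}"
  shows "quot_transport n f (lcoset lam (cyc_group \<sigma>)) = lcoset (restrict (f \<circ> lam) {1..n}) (cyc_group \<sigma>)"
proof -
  have "quot_transport n f (lcoset lam (cyc_group \<sigma>)) = (\<lambda>k. restrict (f \<circ> (lam \<circ> \<sigma> ^^ k)) {1..n}) ` UNIV"
    unfolding quot_transport_def lcoset_def cyc_group_def by (simp add: image_image)
  also have "\<dots> = (\<lambda>k. restrict (f \<circ> lam) {1..n} \<circ> \<sigma> ^^ k) ` UNIV"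
  proof -
    have eq: "\<And>k. restrict (f \<circ> (lam \<circ> \<sigma> ^^ k)) {1..n} = restrict (f \<circ> lam) {1..n} \<circ> \<sigma> ^^ k"
      using restrict_comp_perm[OF permutes_funpow'[OF assms]] by (simp only: comp_assoc)
    show ?thesis by (simp only: eq)
  qed
  also have "\<dots> = lcoset (restrict (f \<circ> lam) {1..n}) (cyc_group \<sigma>)"
    unfolding lcoset_def cyc_group_def by (simp add: image_image)
  finally show ?thesis .
qed

lemma lab_transport:
  assumes "lab n U lam" "bij_betw f U V"
  shows "lab n V (restrict (f \<circ> lam) {1..n})"
  unfolding lab_def
proof
  have "bij_betw (f \<circ> lam) {1..n} V" using assms unfolding lab_def by (metis bij_betw_trans)
  moreover have "bij_betw (restrict (f \<circ> lam) {1..n}) {1..n} V = bij_betw (f \<circ> lam) {1..n} V"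
    by (rule bij_betw_cong) simp
  ultimately show "bij_betw (restrict (f \<circ> lam) {1..n}) {1..n} V" by simp
  show "restrict (f \<circ> lam) {1..n} \<in> extensional {1..n}" by simp
qed

lemma Cn_mem: "s \<in> C_species [n] U \<longleftrightarrow> (\<exists>lam. lab n U lam \<and> s = lcoset lam (cyc_group c))"
  unfolding C_species_def quot_species_def lab_def c_def by auto

lemma Cd_mem:
  assumes "d dvd n"
  shows "s \<in> C_species (replicate (n div d) d) U \<longleftrightarrow> (\<exists>lam. lab n U lam \<and> s = lcoset lam (cyc_group (sig d)))"
proof -
  have "sum_list (replicate (n div d) d) = n" using assms by simp
  then show ?thesis unfolding C_species_def quot_species_def lab_def sig_def by auto
qed

lemma Cn_elem:
  assumes "s \<in> C_species [n] U" "lam \<in> s"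
  shows "lab n U lam" "s = lcoset lam (cyc_group c)"
proof -
  obtain l where l: "lab n U l" "s = lcoset l (cyc_group c)" using assms(1) Cn_mem by blast
  show "lab n U lam" using lcoset_lab[OF l(1) c_permutes] assms(2) l(2) by simp
  show "s = lcoset lam (cyc_group c)" using lcoset_mem_eq[OF cpow_n npos, of lam l] assms(2) l(2) by simp
qed

lemma Cn_two:
  assumes "s \<in> C_species [n] U" "lam \<in> s" "mu \<in> s"
  shows "\<exists>a. mu = lam \<circ> c ^^ a"
  using Cn_elem(2)[OF assms(1,2)] assms(3) lcoset_mem by blast

lemma Cn_nonempty:
  assumes "s \<in> C_species [n] U"
  shows "(SOME lam. lam \<in> s) \<in> s"
proof -
  obtain l where l: "lab n U l" "s = lcoset l (cyc_group c)" using assms(1) Cn_mem by blast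
  then have "l \<in> s" using lcoset_self by simp
  then show ?thesis by (rule someI[where P="\<lambda>x. x \<in> s"])
qed

lemma Cn_comp:
  assumes "s \<in> C_species [n] U" "lam \<in> s"
  shows "lam \<circ> c ^^ a \<in> s"
  using Cn_elem(2)[OF assms] lcoset_mem by blast

end

context stg begin

definition rep :: "(nat \<Rightarrow> 'a) set \<Rightarrow> nat \<Rightarrow> 'a" where "rep s = (SOME lam. lam \<in> s)"

definition Qx :: "(nat \<Rightarrow> 'a) set \<times> (nat \<Rightarrow> 'a) set \<Rightarrow> (nat \<Rightarrow> nat) set" where
  "Qx x = stg_orbit n (Pof n (rep (snd x)) (rep (fst x)))"

definition P0 :: "(nat \<Rightarrow> nat) set \<Rightarrow> nat \<Rightarrow> nat" where "P0 Q = (SOME P. P \<in> Q)"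

definition good :: "(nat \<Rightarrow> 'a) set \<times> (nat \<Rightarrow> 'a) set \<Rightarrow> (nat \<Rightarrow> 'a) \<Rightarrow> bool" where
  "good x lam \<longleftrightarrow> lam \<in> fst x \<and> (\<exists>mu \<in> snd x. lam = mu \<circ> P0 (Qx x))"

definition dd :: "(nat \<Rightarrow> 'a) set \<times> (nat \<Rightarrow> 'a) set \<Rightarrow> nat" where
  "dd x = card (stg_stab n (P0 (Qx x)))"

lemma lhs_mem:
  assumes "x \<in> lhs_species n U"
  shows "fst x \<in> C_species [n] U" "snd x \<in> C_species [n] U"
  using assms unfolding lhs_species_def by auto

lemma comp_cancel_left:
  assumes "c ^^ b \<circ> P' = Q'"
  shows "P' = c ^^ (n - b mod n) \<circ> Q'"
proof -
  have "c ^^ (n - b mod n) \<circ> Q' = (c ^^ (n - b mod n) \<circ> c ^^ b) \<circ> P'" using assms by (simp add: comp_assoc)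
  also have "\<dots> = P'" using cpow_neg[of b] by simp
  finally show ?thesis by simp
qed

lemma Qx_char:
  assumes x: "x \<in> lhs_species n U" and l1: "lam1 \<in> fst x" and l2: "lam2 \<in> snd x"
    and P: "P permutes {1..n}" and e: "lam1 = lam2 \<circ> P"
  shows "Qx x = orb P"
proof -
  note C1 = lhs_mem(1)[OF x] and C2 = lhs_mem(2)[OF x]
  define r1 where "r1 = rep (fst x)"
  define r2 where "r2 = rep (snd x)"
  have r1: "r1 \<in> fst x" unfolding r1_def rep_def using Cn_nonempty[OF C1] .
  have r2: "r2 \<in> snd x" unfolding r2_def rep_def using Cn_nonempty[OF C2] .
  have lr1: "lab n U r1" using Cn_elem(1)[OF C1 r1] .
  have lr2: "lab n U r2" using Cn_elem(1)[OF C2 r2] .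
  have ll2: "lab n U lam2" using Cn_elem(1)[OF C2 l2] .
  define P' where "P' = Pof n r2 r1"
  have P': "P' permutes {1..n}" "r2 \<circ> P' = r1" unfolding P'_def using Pof_props[OF lr2 lr1] by auto
  obtain a where a: "r1 = lam1 \<circ> c ^^ a" using Cn_two[OF C1 l1 r1] by blast
  obtain b where b: "r2 = lam2 \<circ> c ^^ b" using Cn_two[OF C2 l2 r2] by blast
  have "lam2 \<circ> (c ^^ b \<circ> P') = lam2 \<circ> (P \<circ> c ^^ a)"
    using P'(2) a b e by (simp add: comp_assoc)
  then have "c ^^ b \<circ> P' = P \<circ> c ^^ a"
    using lab_cancel[OF ll2] permutes_compose[OF P'(1) cpow_permutes] permutes_compose[OF cpow_permutes P]
    by blast
  then have "P' = c ^^ (n - b mod n) \<circ> P \<circ> c ^^ a" using comp_cancel_left by (metis comp_assoc)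
  then have "orb P' = orb P" using orb_shift[OF P] by simp
  moreover have "Qx x = orb P'" unfolding Qx_def P'_def[symmetric] r1_def[symmetric] r2_def[symmetric]
    using stg_orbit_eq[OF P'(1)] unfolding P'_def r1_def r2_def by simp
  ultimately show ?thesis by simp
qed

lemma Qx_base:
  assumes x: "x \<in> lhs_species n U"
  obtains r1 r2 P' where "r1 \<in> fst x" "r2 \<in> snd x" "P' permutes {1..n}" "r1 = r2 \<circ> P'" "Qx x = orb P'"
proof -
  note C1 = lhs_mem(1)[OF x] and C2 = lhs_mem(2)[OF x]
  define r1 where "r1 = rep (fst x)"
  define r2 where "r2 = rep (snd x)"
  have r1: "r1 \<in> fst x" unfolding r1_def rep_def using Cn_nonempty[OF C1] .
  have r2: "r2 \<in> snd x" unfolding r2_def rep_def using Cn_nonempty[OF C2] .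
  have lr1: "lab n U r1" using Cn_elem(1)[OF C1 r1] .
  have lr2: "lab n U r2" using Cn_elem(1)[OF C2 r2] .
  define P' where "P' = Pof n r2 r1"
  have P': "P' permutes {1..n}" "r2 \<circ> P' = r1" unfolding P'_def using Pof_props[OF lr2 lr1] by auto
  have "Qx x = orb P'" using Qx_char[OF x r1 r2 P'(1) P'(2)[symmetric]] .
  then show ?thesis by (rule that[OF r1 r2 P'(1) P'(2)[symmetric]])
qed

lemma Qx_SP:
  assumes x: "x \<in> lhs_species n U"
  shows "Qx x \<in> SP n"
proof -
  obtain r1 r2 P' where P': "P' permutes {1..n}" "Qx x = orb P'" using Qx_base[OF x] by blast
  then have "Qx x = stg_orbit n P'" using stg_orbit_eq by simp
  then show ?thesis unfolding SP_def using P'(1) by blast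
qed

lemma P0_props:
  assumes "Q \<in> SP n"
  shows "P0 Q \<in> Q" "P0 Q permutes {1..n}" "orb (P0 Q) = Q"
proof -
  show "P0 Q \<in> Q" unfolding P0_def using SP_some[OF assms] .
  then show "P0 Q permutes {1..n}" "orb (P0 Q) = Q" using SP_mem[OF assms] stg_orbit_eq by auto
qed

lemma good_ex:
  assumes x: "x \<in> lhs_species n U"
  shows "\<exists>lam. good x lam"
proof -
  note C1 = lhs_mem(1)[OF x] and C2 = lhs_mem(2)[OF x]
  obtain r1 r2 P' where b: "r1 \<in> fst x" "r2 \<in> snd x" "P' permutes {1..n}" "r1 = r2 \<circ> P'" "Qx x = orb P'"
    using Qx_base[OF x] by blast
  have "P0 (Qx x) \<in> orb P'" using P0_props(1)[OF Qx_SP[OF x]] b(5) by simp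
  then obtain k r where kr: "P0 (Qx x) = c ^^ k \<circ> P' \<circ> c ^^ r" unfolding orb_def by blast
  define lam where "lam = r1 \<circ> c ^^ r"
  define mu where "mu = r2 \<circ> c ^^ (n - k mod n)"
  have "lam \<in> fst x" unfolding lam_def using Cn_comp[OF C1 b(1)] .
  moreover have "mu \<in> snd x" unfolding mu_def using Cn_comp[OF C2 b(2)] .
  moreover have "mu \<circ> P0 (Qx x) = lam"
  proof -
    have "mu \<circ> P0 (Qx x) = r2 \<circ> (c ^^ (n - k mod n) \<circ> c ^^ k) \<circ> P' \<circ> c ^^ r"
      unfolding mu_def kr by (simp add: comp_assoc)
    also have "\<dots> = lam" unfolding lam_def using cpow_neg[of k] b(4) by (simp add: comp_assoc)
    finally show ?thesis .
  qed
  ultimately show ?thesis unfolding good_def by metis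
qed

lemma good_some:
  assumes x: "x \<in> lhs_species n U"
  shows "good x (SOME lam. good x lam)"
  using good_ex[OF x] by (rule someI_ex)

lemma dd_props:
  assumes x: "x \<in> lhs_species n U"
  shows "0 < dd x" "dd x dvd n"
  unfolding dd_def using stab_struct[OF P0_props(2)[OF Qx_SP[OF x]]] by auto

lemma key:
  assumes x: "x \<in> lhs_species n U" and gl: "good x lam" and gm: "good x mu"
  shows "lcoset (mu \<circ> tau (dd x)) (cyc_group (sig (dd x))) = lcoset (lam \<circ> tau (dd x)) (cyc_group (sig (dd x)))"
proof -
  note C1 = lhs_mem(1)[OF x] and C2 = lhs_mem(2)[OF x]
  define P where "P = P0 (Qx x)"
  define d where "d = dd x"
  have P: "P permutes {1..n}" unfolding P_def using P0_props(2)[OF Qx_SP[OF x]] .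
  have d: "0 < d" "d dvd n" unfolding d_def using dd_props[OF x] by auto
  have dR: "\<And>r. r < n \<Longrightarrow> r \<in> Rs P \<longleftrightarrow> (n div d) dvd r"
    unfolding d_def dd_def P_def[symmetric] using stab_struct(3)[OF P] by blast
  obtain l2 where l2: "l2 \<in> snd x" "lam = l2 \<circ> P" using gl unfolding good_def P_def by blast
  obtain m2 where m2: "m2 \<in> snd x" "mu = m2 \<circ> P" using gm unfolding good_def P_def by blast
  have lam1: "lam \<in> fst x" "mu \<in> fst x" using gl gm unfolding good_def by auto
  obtain a where a: "mu = lam \<circ> c ^^ a" using Cn_two[OF C1 lam1] by blast
  obtain b where b: "m2 = l2 \<circ> c ^^ b" using Cn_two[OF C2 l2(1) m2(1)] by blast
  have ll2: "lab n U l2" using Cn_elem(1)[OF C2 l2(1)] .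
  have "l2 \<circ> (P \<circ> c ^^ a) = l2 \<circ> (c ^^ b \<circ> P)" using a b l2(2) m2(2) by (simp add: comp_assoc)
  then have "P \<circ> c ^^ a = c ^^ b \<circ> P"
    using lab_cancel[OF ll2] permutes_compose[OF cpow_permutes P] permutes_compose[OF P cpow_permutes]
    by blast
  then have "P = c ^^ (n - b mod n) \<circ> (P \<circ> c ^^ a)" using comp_cancel_left by metis
  then have "c ^^ ((n - b mod n) mod n) \<circ> P \<circ> c ^^ (a mod n) = P"
    using cpow_mod[of "n - b mod n"] cpow_mod[of a] by (simp add: comp_assoc)
  moreover have "(n - b mod n) mod n < n" "a mod n < n" using npos by simp_all
  ultimately have "a mod n \<in> Rs P" using Rs_mem[OF P] by blast
  then have "(n div d) dvd (a mod n)" using dR \<open>a mod n < n\<close> by blast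
  then obtain t where t: "a mod n = n div d * t" by blast
  have "mu \<circ> tau d = lam \<circ> (c ^^ (n div d * t) \<circ> tau d)"
    using a cpow_mod[of a] t by (simp add: comp_assoc)
  also have "\<dots> = lam \<circ> tau d \<circ> sig d ^^ t" using tau_sigpow[OF d, of t] by (simp add: comp_assoc)
  finally have "mu \<circ> tau d = lam \<circ> tau d \<circ> sig d ^^ t" .
  then show ?thesis unfolding d_def[symmetric] using lcoset_shift[OF sig_pow_d[OF d] d(1)] by simp
qed

end

context stg begin

definition Aset :: "nat \<Rightarrow> (nat \<Rightarrow> nat) set set" where
  "Aset d = {Q \<in> SP n. card (pattern_stab n Q) = d}"

definition idx :: "nat \<Rightarrow> (nat \<Rightarrow> nat) set \<Rightarrow> nat" where
  "idx d = (SOME h. bij_betw h (Aset d) {0..<card (Aset d)})"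

definition alpha :: "'a set \<Rightarrow> (nat \<Rightarrow> 'a) set \<times> (nat \<Rightarrow> 'a) set \<Rightarrow> nat \<times> nat \<times> (nat \<Rightarrow> 'a) set" where
  "alpha U x = (dd x, idx (dd x) (Qx x),
     lcoset ((SOME lam. good x lam) \<circ> tau (dd x)) (cyc_group (sig (dd x))))"

lemma SP_finite: "finite (SP n)"
proof -
  have "SP n = stg_orbit n ` {P. P permutes {1..n}}" unfolding SP_def by auto
  then show ?thesis using finite_permutations[of "{1..n}"] by simp
qed

lemma idx_bij: "bij_betw (idx d) (Aset d) {0..<card (Aset d)}"
proof -
  have "finite (Aset d)" using SP_finite unfolding Aset_def by simp
  then have "\<exists>h. bij_betw h (Aset d) {0..<card (Aset d)}" by (rule ex_bij_betw_finite_nat)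
  then show ?thesis unfolding idx_def by (rule someI_ex)
qed

lemma num_eq: "num_patterns_stab n d = card (Aset d)"
  unfolding num_patterns_stab_def Aset_def ..

lemma pstab_eq: "pattern_stab n Q = stg_stab n (P0 Q)"
  unfolding pattern_stab_def P0_def ..

lemma Qx_Aset:
  assumes x: "x \<in> lhs_species n U"
  shows "Qx x \<in> Aset (dd x)"
  unfolding Aset_def dd_def pstab_eq using Qx_SP[OF x] by simp

lemma alpha_into:
  assumes x: "x \<in> lhs_species n U"
  shows "alpha U x \<in> rhs_species n U"
proof -
  define lam where "lam = (SOME lam. good x lam)"
  define d where "d = dd x"
  have g: "good x lam" unfolding lam_def using good_some[OF x] .
  have d: "0 < d" "d dvd n" unfolding d_def using dd_props[OF x] by auto
  have "lab n U lam" using g Cn_elem(1)[OF lhs_mem(1)[OF x]] unfolding good_def by blast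
  then have "lab n U (lam \<circ> tau d)" using lab_comp tau_permutes[OF d] by blast
  then have s: "lcoset (lam \<circ> tau d) (cyc_group (sig d)) \<in> C_species (replicate (n div d) d) U"
    using Cd_mem[OF d(2)] by blast
  have "idx d (Qx x) < num_patterns_stab n d"
    using bij_betw_apply[OF idx_bij Qx_Aset[OF x]] unfolding num_eq d_def by simp
  then show ?thesis unfolding alpha_def rhs_species_def lam_def[symmetric] d_def[symmetric]
    using s d(2) by simp
qed

end

context stg begin

lemma alpha_inj:
  assumes x: "x \<in> lhs_species n U" and y: "y \<in> lhs_species n U" and e: "alpha U x = alpha U y"
  shows "x = y"
proof -
  define lam where "lam = (SOME lam. good x lam)"
  define mu where "mu = (SOME lam. good y lam)"
  define d where "d = dd x"
  have gx: "good x lam" unfolding lam_def using good_some[OF x] .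
  have gy: "good y mu" unfolding mu_def using good_some[OF y] .
  have d: "0 < d" "d dvd n" unfolding d_def using dd_props[OF x] by auto
  have dy: "dd y = d" using e unfolding alpha_def d_def by simp
  have "idx d (Qx x) = idx d (Qx y)" using e dy unfolding alpha_def d_def by simp
  moreover have "Qx x \<in> Aset d" "Qx y \<in> Aset d" using Qx_Aset[OF x] Qx_Aset[OF y] dy unfolding d_def by auto
  ultimately have QQ: "Qx x = Qx y" using bij_betw_imp_inj_on[OF idx_bij] unfolding inj_on_def by blast
  define P where "P = P0 (Qx x)"
  have P: "P permutes {1..n}" unfolding P_def using P0_props(2)[OF Qx_SP[OF x]] .
  have dR: "\<And>r. r < n \<Longrightarrow> r \<in> Rs P \<longleftrightarrow> (n div d) dvd r"
    unfolding d_def dd_def P_def[symmetric] using stab_struct(3)[OF P] by blast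
  have "lcoset (lam \<circ> tau d) (cyc_group (sig d)) = lcoset (mu \<circ> tau d) (cyc_group (sig d))"
    using e dy unfolding alpha_def lam_def mu_def d_def by simp
  then obtain t where t: "mu \<circ> tau d = lam \<circ> tau d \<circ> sig d ^^ t" using lcoset_eq_imp[of "mu \<circ> tau d" "sig d" "lam \<circ> tau d"] by auto
  then have "mu \<circ> tau d = (lam \<circ> c ^^ (n div d * t)) \<circ> tau d" using tau_sigpow[OF d, of t] by (simp add: comp_assoc)
  then have mu_eq: "mu = lam \<circ> c ^^ (n div d * t)" using perm_cancel_right[OF tau_permutes[OF d]] by blast
  define r where "r = (n div d * t) mod n"
  have rn: "r < n" unfolding r_def using npos by simp
  have "(n div d) dvd n" using d(2) by (metis dvd_div_mult_self dvd_triv_left)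
  moreover have "(n div d) dvd (n div d * t)" by simp
  ultimately have "(n div d) dvd r" unfolding r_def by (rule dvd_mod[rotated])
  then have "r \<in> Rs P" using dR rn by blast
  then obtain k where k: "k < n" "c ^^ k \<circ> P \<circ> c ^^ r = P" using Rs_mem[OF P rn] by blast
  have Pc: "P \<circ> c ^^ r = c ^^ (n - k mod n) \<circ> P" using comp_cancel_left[of k "P \<circ> c ^^ r" P] k(2) by (simp add: comp_assoc)
  note Cx1 = lhs_mem(1)[OF x] and Cx2 = lhs_mem(2)[OF x] and Cy1 = lhs_mem(1)[OF y] and Cy2 = lhs_mem(2)[OF y]
  obtain l2 where l2: "l2 \<in> snd x" "lam = l2 \<circ> P" using gx unfolding good_def P_def by blast
  obtain m2 where m2: "m2 \<in> snd y" "mu = m2 \<circ> P" using gy unfolding good_def P_def QQ by blast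
  have lamx: "lam \<in> fst x" using gx unfolding good_def by blast
  have muy: "mu \<in> fst y" using gy unfolding good_def by blast
  have "fst y = lcoset mu (cyc_group c)" using Cn_elem(2)[OF Cy1 muy] .
  also have "\<dots> = lcoset lam (cyc_group c)" unfolding mu_eq by (rule lcoset_shift[OF cpow_n npos])
  also have "\<dots> = fst x" using Cn_elem(2)[OF Cx1 lamx] by simp
  finally have f: "fst y = fst x" .
  have "m2 \<circ> P = l2 \<circ> P \<circ> c ^^ r" using m2(2) mu_eq l2(2) cpow_mod[of "n div d * t"] unfolding r_def by simp
  also have "\<dots> = (l2 \<circ> c ^^ (n - k mod n)) \<circ> P" using Pc by (simp add: comp_assoc)
  finally have "m2 = l2 \<circ> c ^^ (n - k mod n)" using perm_cancel_right[OF P] by blast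
  then have "lcoset m2 (cyc_group c) = lcoset l2 (cyc_group c)" using lcoset_shift[OF cpow_n npos] by simp
  then have s: "snd y = snd x" using Cn_elem(2)[OF Cy2 m2(1)] Cn_elem(2)[OF Cx2 l2(1)] by simp
  show "x = y" using f s by (simp add: prod_eq_iff)
qed

lemma alpha_surj:
  assumes z: "z \<in> rhs_species n U"
  shows "\<exists>x \<in> lhs_species n U. alpha U x = z"
proof -
  obtain d j s where z': "z = (d, j, s)" "d dvd n" "j < num_patterns_stab n d"
      "s \<in> C_species (replicate (n div d) d) U"
    using z unfolding rhs_species_def by auto
  have "d \<noteq> 0" using z'(2) npos by (cases "d = 0") auto
  then have d: "0 < d" "d dvd n" using z'(2) by auto
  obtain mu0 where mu0: "lab n U mu0" "s = lcoset mu0 (cyc_group (sig d))" using z'(4) Cd_mem[OF d(2)] by blast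
  define Q where "Q = inv_into (Aset d) (idx d) j"
  have jin: "j \<in> {0..<card (Aset d)}" using z'(3) num_eq by simp
  have QA: "Q \<in> Aset d" unfolding Q_def by (rule bij_betw_apply[OF bij_betw_inv_into[OF idx_bij] jin])
  have Qj: "idx d Q = j" unfolding Q_def using bij_betw_inv_into_right[OF idx_bij jin] .
  have QSP: "Q \<in> SP n" and Qd: "card (stg_stab n (P0 Q)) = d" using QA unfolding Aset_def pstab_eq by auto
  define P where "P = P0 Q"
  have P: "P permutes {1..n}" "orb P = Q" unfolding P_def using P0_props[OF QSP] by auto
  define lam1 where "lam1 = mu0 \<circ> inv (tau d)"
  define lam2 where "lam2 = lam1 \<circ> inv P"
  have ll1: "lab n U lam1" unfolding lam1_def using lab_comp[OF mu0(1) permutes_inv[OF tau_permutes[OF d]]] .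
  have ll2: "lab n U lam2" unfolding lam2_def using lab_comp[OF ll1 permutes_inv[OF P(1)]] .
  define x where "x = (lcoset lam1 (cyc_group c), lcoset lam2 (cyc_group c))"
  have "lcoset lam1 (cyc_group c) \<in> C_species [n] U" using ll1 Cn_mem by blast
  moreover have "lcoset lam2 (cyc_group c) \<in> C_species [n] U" using ll2 Cn_mem by blast
  ultimately have x: "x \<in> lhs_species n U" unfolding x_def lhs_species_def by simp
  have l1x: "lam1 \<in> fst x" and l2x: "lam2 \<in> snd x" unfolding x_def using lcoset_self by auto
  have e12: "lam1 = lam2 \<circ> P" unfolding lam2_def using permutes_inv_o(2)[OF P(1)] by (simp add: comp_assoc)
  have Qx: "Qx x = Q" using Qx_char[OF x l1x l2x P(1) e12] P(2) by simp
  have ddx: "dd x = d" unfolding dd_def Qx using Qd .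
  have gl1: "good x lam1" unfolding good_def Qx P_def[symmetric] using l1x l2x e12 by blast
  have "lcoset ((SOME lam. good x lam) \<circ> tau d) (cyc_group (sig d)) = lcoset (lam1 \<circ> tau d) (cyc_group (sig d))"
    using key[OF x gl1 good_some[OF x]] ddx by simp
  also have "lam1 \<circ> tau d = mu0" unfolding lam1_def using permutes_inv_o(2)[OF tau_permutes[OF d]] by (simp add: comp_assoc)
  finally have cs0: "lcoset ((SOME lam. good x lam) \<circ> tau d) (cyc_group (sig d)) = lcoset mu0 (cyc_group (sig d))" .
  have cs: "lcoset ((SOME lam. good x lam) \<circ> tau d) (cyc_group (sig d)) = s" unfolding mu0(2) by (rule cs0)
  have "alpha U x = (d, j, s)" by (simp only: alpha_def ddx Qx Qj cs)
  then show ?thesis using x z'(1) by blast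
qed

lemma alpha_nat:
  assumes x: "x \<in> lhs_species n U" and f: "bij_betw f U V"
  shows "alpha V (lhs_transport n f x) = rhs_transport n f (alpha U x)"
proof -
  define lam where "lam = (SOME lam. good x lam)"
  define d where "d = dd x"
  define P where "P = P0 (Qx x)"
  have gx: "good x lam" unfolding lam_def using good_some[OF x] .
  have d: "0 < d" "d dvd n" unfolding d_def using dd_props[OF x] by auto
  have P: "P permutes {1..n}" unfolding P_def using P0_props(2)[OF Qx_SP[OF x]] .
  note Cx1 = lhs_mem(1)[OF x] and Cx2 = lhs_mem(2)[OF x]
  obtain l2 where l2: "l2 \<in> snd x" "lam = l2 \<circ> P" using gx unfolding good_def P_def by blast
  have lamx: "lam \<in> fst x" using gx unfolding good_def by blast
  have fx: "fst x = lcoset lam (cyc_group c)" using Cn_elem(2)[OF Cx1 lamx] .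
  have sx: "snd x = lcoset l2 (cyc_group c)" using Cn_elem(2)[OF Cx2 l2(1)] .
  define lam' where "lam' = restrict (f \<circ> lam) {1..n}"
  define l2' where "l2' = restrict (f \<circ> l2) {1..n}"
  have tx: "lhs_transport n f x = (lcoset lam' (cyc_group c), lcoset l2' (cyc_group c))"
    unfolding lhs_transport_def fx sx lam'_def l2'_def by (simp add: transport_lcoset[OF c_permutes])
  have llam': "lab n V lam'" unfolding lam'_def using lab_transport[OF Cn_elem(1)[OF Cx1 lamx] f] .
  have ll2': "lab n V l2'" unfolding l2'_def using lab_transport[OF Cn_elem(1)[OF Cx2 l2(1)] f] .
  define y where "y = lhs_transport n f x"
  have y: "y \<in> lhs_species n V" unfolding y_def tx lhs_species_def using llam' ll2' Cn_mem by blast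
  have l1y: "lam' \<in> fst y" and l2y: "l2' \<in> snd y" unfolding y_def tx using lcoset_self by auto
  have e12: "lam' = l2' \<circ> P" unfolding lam'_def l2'_def l2(2) using restrict_comp_perm[OF P] by (simp add: comp_assoc)
  have "Qx y = orb P" using Qx_char[OF y l1y l2y P e12] .
  also have "\<dots> = Qx x" unfolding P_def using P0_props(3)[OF Qx_SP[OF x]] .
  finally have Qy: "Qx y = Qx x" .
  have ddy: "dd y = d" unfolding dd_def d_def Qy ..
  have gl: "good y lam'" unfolding good_def Qy P_def[symmetric] using l1y l2y e12 by blast
  have "lcoset ((SOME lam. good y lam) \<circ> tau d) (cyc_group (sig d)) = lcoset (lam' \<circ> tau d) (cyc_group (sig d))"
    using key[OF y gl good_some[OF y]] ddy by simp
  also have "\<dots> = quot_transport n f (lcoset (lam \<circ> tau d) (cyc_group (sig d)))"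
  proof -
    have "restrict (f \<circ> (lam \<circ> tau d)) {1..n} = lam' \<circ> tau d"
      unfolding lam'_def using restrict_comp_perm[OF tau_permutes[OF d], of f lam] by (simp add: comp_assoc)
    then show ?thesis using transport_lcoset[OF sig_permutes[OF d], of f "lam \<circ> tau d"] by simp
  qed
  finally have "alpha V y = (d, idx d (Qx x), quot_transport n f (lcoset (lam \<circ> tau d) (cyc_group (sig d))))"
    unfolding alpha_def ddy Qy by simp
  moreover have "alpha U x = (d, idx d (Qx x), lcoset (lam \<circ> tau d) (cyc_group (sig d)))"
    unfolding alpha_def d_def lam_def ..
  ultimately show ?thesis unfolding y_def rhs_transport_def by simp
qed

end

theorem mainTheorem15:
  fixes n :: nat
  assumes "n \<ge> 1"
  shows "\<exists>\<alpha> :: 'a set \<Rightarrow> ((nat \<Rightarrow> 'a) set \<times> (nat \<Rightarrow> 'a) set) \<Rightarrow> (nat \<times> nat \<times> (nat \<Rightarrow> 'a) set).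
           (\<forall>U. finite U \<longrightarrow> bij_betw (\<alpha> U) (lhs_species n U) (rhs_species n U)) \<and>
           (\<forall>U V f. finite U \<longrightarrow> bij_betw f U V \<longrightarrow>
              (\<forall>x \<in> lhs_species n U. \<alpha> V (lhs_transport n f x) = rhs_transport n f (\<alpha> U x)))"
proof -
  interpret stg n using assms by unfold_locales simp
  have b: "bij_betw (alpha U) (lhs_species n U) (rhs_species n U)" for U :: "'a set"
    unfolding bij_betw_def
  proof
    show "inj_on (alpha U) (lhs_species n U)" using alpha_inj by (intro inj_onI) blast
    show "alpha U ` lhs_species n U = rhs_species n U"
      using alpha_into alpha_surj by blast
  qed
  have nat: "alpha V (lhs_transport n f x) = rhs_transport n f (alpha U x)"
    if "bij_betw f U V" "x \<in> lhs_species n U" for U V :: "'a set" and f x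
    using alpha_nat that by blast
  show ?thesis
    by (rule exI[of _ alpha]) (use b nat in blast)
qed

end
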